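(* Let $R$ be an abelian $\star$-ring. If $a\in R$ is $\star$-clean, then $ae$ is $\star$-clean for every $e\in P(R)$.
   Context: Rings are associative with identity; $R$ is abelian if all its idempotents are central. A $\star$-ring is a ring with a map $\star$ satisfying $(x+y)^\star=x^\star+y^\star$, $(xy)^\star=y^\star x^\star$, $(x^\star)^\star=x$. A projection is $p$ with $p^2=p=p^\star$; $P(R)$ is the set of projections, $U(R)$ the units. An element $x$ is $\star$-clean if $x=u+p$ with $u\in U(R)$, $p\in P(R)$. *)

theory Defs
  imports Main
begin

definition star_ring :: "('a::ring_1 \<Rightarrow> 'a) \<Rightarrow> bool" where
  "star_ring s \<longleftrightarrow> (\<forall>x y. s (x + y) = s x + s y) \<and> (\<forall>x y. s (x * y) = s y * s x)
     \<and> (\<forall>x. s (s x) = x)"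

definition abelian_ring :: "'a::ring_1 itself \<Rightarrow> bool" where
  "abelian_ring _ \<longleftrightarrow> (\<forall>e::'a. e * e = e \<longrightarrow> (\<forall>x. e * x = x * e))"

definition projections :: "('a::ring_1 \<Rightarrow> 'a) \<Rightarrow> 'a set" where
  "projections s = {p. p * p = p \<and> p = s p}"

definition ring_units :: "'a::ring_1 set" where
  "ring_units = {u. \<exists>v. u * v = 1 \<and> v * u = 1}"

definition star_clean :: "('a::ring_1 \<Rightarrow> 'a) \<Rightarrow> 'a \<Rightarrow> bool" where
  "star_clean s x \<longleftrightarrow> (\<exists>u p. u \<in> ring_units \<and> p \<in> projections s \<and> x = u + p)"

end

theory Submission
  imports Defs
begin

theorem proposition4p14:
  fixes s :: "'a::ring_1 \<Rightarrow> 'a" and a :: 'a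
  assumes "star_ring s"
    and "abelian_ring TYPE('a)"
    and "star_clean s a"
  shows "\<forall>e \<in> projections s. star_clean s (a * e)"
proof
  fix e assume eP: "e \<in> projections s"
  have add: "\<And>x y. s (x + y) = s x + s y" and mul: "\<And>x y. s (x * y) = s y * s x"
    and inv: "\<And>x. s (s x) = x" using assms(1) unfolding star_ring_def by auto
  have cen: "\<And>(f::'a) x. f * f = f \<Longrightarrow> f * x = x * f"
    using assms(2) unfolding abelian_ring_def by auto
  have diff: "\<And>x y. s (x - y) = s x - s y"
  proof -
    fix x y
    have "s x = s (x - y + y)" by simp
    also have "\<dots> = s (x - y) + s y" by (rule add)
    finally show "s (x - y) = s x - s y" by (simp add: algebra_simps)
  qed
  have s1: "s 1 = 1"
  proof -
    have "s 1 * y = y" for y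
    proof -
      have "s 1 * y = s 1 * s (s y)" by (simp add: inv)
      also have "\<dots> = s (s y * 1)" by (rule mul[symmetric])
      finally show ?thesis by (simp add: inv)
    qed
    from this[of 1] show ?thesis by simp
  qed
  obtain u p where u: "u \<in> ring_units" and pP: "p \<in> projections s" and a: "a = u + p"
    using assms(3) unfolding star_clean_def by auto
  obtain v where uv: "u * v = 1" "v * u = 1" using u unfolding ring_units_def by auto
  have ee: "e * e = e" and se: "s e = e" using eP unfolding projections_def by auto
  have pp: "p * p = p" and sp: "s p = p" using pP unfolding projections_def by auto
  have ce: "\<And>x. e * x = x * e" using cen ee by blast
  have cp: "\<And>x. p * x = x * p" using cen pp by blast
  define q where "q = p * e + (1 - e)"
  define w where "w = u * e - (1 - e)"
  define w' where "w' = v * e - (1 - e)"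
  have pe: "e * p = p * e" using ce by blast
  have ef: "e * (1 - e) = 0" using ee by (simp add: algebra_simps)
  have fe: "(1 - e) * e = 0" using ee by (simp add: algebra_simps)
  have ff: "(1 - e) * (1 - e) = 1 - e" using ee by (simp add: algebra_simps)
  have pepe: "p * e * (p * e) = p * e"
    by (metis mult.assoc pe pp ee)
  have pef: "p * e * (1 - e) = 0" by (simp add: mult.assoc ef)
  have fpe: "(1 - e) * (p * e) = 0"
    by (metis mult.assoc ce fe mult_zero_left)
  have "q * q = (p * e * (p * e) + (1 - e) * (p * e)) + (p * e * (1 - e) + (1 - e) * (1 - e))"
    unfolding q_def by (simp only: distrib_left distrib_right)
  also have "\<dots> = q" unfolding q_def pepe pef fpe ff by simp
  finally have qq: "q * q = q" .
  have "s q = q" unfolding q_def by (simp only: add diff mul s1 se sp pe)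
  hence qP: "q \<in> projections s" using qq unfolding projections_def by auto
  have dd: "\<And>a b c d :: 'a. (a - b) * (c - d) = a * c - a * d - (b * c - b * d)"
    by (simp add: algebra_simps)
  have fc: "\<And>x. (1 - e) * x = x * (1 - e)" using ce by (simp add: algebra_simps)
  have m1: "u * e * (v * e) = u * v * (e * e)" by (metis mult.assoc ce)
  have m2: "v * e * (u * e) = v * u * (e * e)" by (metis mult.assoc ce)
  have m3: "\<And>x. x * e * (1 - e) = 0" by (simp add: mult.assoc ef)
  have m4: "\<And>x. (1 - e) * (x * e) = 0" by (metis mult.assoc fc fe mult_zero_right)
  have "w * w' = u * e * (v * e) - u * e * (1 - e) - ((1 - e) * (v * e) - (1 - e) * (1 - e))"
    unfolding w_def w'_def by (rule dd)
  also have "\<dots> = 1" unfolding m1 m3 m4 ff uv ee by simp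
  finally have 1: "w * w' = 1" .
  have "w' * w = v * e * (u * e) - v * e * (1 - e) - ((1 - e) * (u * e) - (1 - e) * (1 - e))"
    unfolding w_def w'_def by (rule dd)
  also have "\<dots> = 1" unfolding m2 m3 m4 ff uv ee by simp
  finally have 2: "w' * w = 1" .
  have wU: "w \<in> ring_units" unfolding ring_units_def using 1 2 by auto
  have "a * e = w + q" unfolding a w_def q_def by (simp add: algebra_simps)
  thus "star_clean s (a * e)" unfolding star_clean_def using wU qP by blast
qed

end
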